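(* Let $h:(0,1/2)\to\mathbb{R}$, $h(t)=-3t(1-2t)\log\frac{1-2t}{t}-3t+1$, and for $r>0$ let $f_r(t)=\frac{2}{3(1-r-3t)}\log\frac{1-2t}{t}$ and $k_r=(1-r)/3$. Then: (1) For $0<r<1$ and $t\in(0,k_r)\cup(k_r,1/2)$, $f_r'(t)$ and $r-h(t)$ have the same sign; in particular $f_r'(t)=0$ if and only if $h(t)=r$. (2) For any $0<r<1$, the equation $f_r'(t)=0$ has a unique solution $m_0(r)\in(0,k_r)$. The function $f_r$ is decreasing on $(0,m_0(r))$ and increasing on $(m_0(r),k_r)$ and on $(k_r,1/2)$. Furthermore $\lim_{t\downarrow0}f_r(t)=\lim_{t\uparrow k_r}f_r(t)=\lim_{t\uparrow1/2}f_r(t)=\infty$ and $\lim_{t\downarrow k_r}f_r(t)=-\infty$. (3) For all $r\ge1$, $f_r$ is increasing on $(0,1/2)$, and $\lim_{t\downarrow0}f_r(t)=-\infty$, $\lim_{t\uparrow1/2}f_r(t)=\infty$. (4) On $(0,1)$ the map $r\mapsto m_0(r)$ is decreasing and $\lim_{r\uparrow1}m_0(r)=0$. (5) On $(0,1)$ the map $r\mapsto f_r(m_0(r))$ is increasing and $\lim_{r\uparrow1}f_r(m_0(r))=\infty$.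
   Context: For $0<r<1$, $f_r$ is regarded as a function on $(0,k_r)\cup(k_r,1/2)$; for $r\ge 1$, $f_r$ is defined on $(0,1/2)$. *)

theory Defs
  imports "HOL-Analysis.Analysis"
begin

definition h :: "real \<Rightarrow> real" where
  "h t = - 3 * t * (1 - 2 * t) * ln ((1 - 2 * t) / t) - 3 * t + 1"

definition f :: "real \<Rightarrow> real \<Rightarrow> real" where
  "f r t = 2 / (3 * (1 - r - 3 * t)) * ln ((1 - 2 * t) / t)"

definition k :: "real \<Rightarrow> real" where
  "k r = (1 - r) / 3"

definition m0 :: "real \<Rightarrow> real" where
  "m0 r = (THE t. t \<in> {0<..<k r} \<and> deriv (f r) t = 0)"

end

theory Submission
  imports Defs "HOL-Real_Asymp.Real_Asymp"
begin

definition Lf :: "real \<Rightarrow> real" where "Lf t = ln((1-2*t)/t)"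

lemma Lf_deriv:
  assumes "0 < t" "t < 1/2"
  shows "(Lf has_real_derivative (-1/(t*(1-2*t)))) (at t)"
  unfolding Lf_def[abs_def] using assms by (auto intro!: derivative_eq_intros simp: field_simps)

lemma f_eq: "f r = (\<lambda>t. 2 / (3 * (1 - r - 3 * t)) * Lf t)"
  by (simp add: f_def Lf_def fun_eq_iff)
lemma h_eq: "h = (\<lambda>t. -3*t*(1-2*t)*Lf t - 3*t + 1)"
  by (simp add: h_def Lf_def fun_eq_iff)

lemma A_deriv:
  assumes "1 - r - 3*t \<noteq> (0::real)"
  shows "((\<lambda>t. 2 / (3 * (1 - r - 3 * t))) has_real_derivative (2/(1-r-3*t)^2)) (at t)"
proof -
  define D where "D = 1 - r - 3*t"
  have D: "D \<noteq> 0" using assms D_def by simp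
  have "((\<lambda>t. 2 / (3 * (1 - r - 3 * t))) has_real_derivative (- (2 * (3 * (0 - 0 - 3 * 1))) / (3 * (1 - r - 3 * t) * (3 * (1 - r - 3 * t))))) (at t)"
    by (rule derivative_eq_intros refl | use assms in simp)+
  also have "(- (2 * (3 * (0 - 0 - 3 * 1))) / (3 * (1 - r - 3 * t) * (3 * (1 - r - 3 * t)))) = 2/(1-r-3*t)^2"
    unfolding D_def[symmetric] using D by (simp add: field_simps power2_eq_square)
  finally show ?thesis .
qed

lemma alg1:
  assumes "D \<noteq> 0" "t \<noteq> 0" "1-2*t \<noteq> (0::real)" "D = 1-r-3*t"
  shows "2*(r - (-3*t*(1-2*t)*Lv - 3*t + 1))/(3*t*(1-2*t)*D^2) = 2/D^2*Lv + 2/(3*D)*(-1/(t*(1-2*t)))"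
proof -
  have r: "r = 1 - 3*t - D" using assms(4) by simp
  show ?thesis unfolding r using assms(1-3) by (simp add: field_simps power2_eq_square)
qed

lemma f_deriv:
  assumes "0 < t" "t < 1/2" "1 - r - 3*t \<noteq> 0"
  shows "(f r has_real_derivative 2*(r - h t)/(3*t*(1-2*t)*(1-r-3*t)^2)) (at t)"
proof -
  have "(f r has_real_derivative 2/(1-r-3*t)^2 * Lf t + (-1/(t*(1-2*t))) * (2 / (3 * (1 - r - 3 * t)))) (at t)"
    unfolding f_eq using DERIV_mult[OF A_deriv[OF assms(3)] Lf_deriv[OF assms(1,2)]] by (simp only:)
  also have "2/(1-r-3*t)^2 * Lf t + (-1/(t*(1-2*t))) * (2 / (3 * (1 - r - 3 * t))) = 2*(r - h t)/(3*t*(1-2*t)*(1-r-3*t)^2)"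
    unfolding h_eq using alg1[of "1-r-3*t" t r "Lf t"] assms by (simp add: mult.commute)
  finally show ?thesis .
qed

lemma h_deriv:
  assumes "0 < t" "t < 1/2"
  shows "(h has_real_derivative -3*(1-4*t)*Lf t) (at t)"
proof -
  have "(h has_real_derivative (-3*(1-2*t) + (-3*t)*(-2))*Lf t + (-3*t*(1-2*t))*(-1/(t*(1-2*t))) - 3) (at t)"
    unfolding h_eq by (rule derivative_eq_intros Lf_deriv refl | use assms in simp)+
  also have "(-3*(1-2*t) + (-3*t)*(-2))*Lf t + (-3*t*(1-2*t))*(-1/(t*(1-2*t))) - 3 = -3*(1-4*t)*Lf t"
    using assms by (simp add: field_simps)
  finally show ?thesis .
qed
lemma Lf_pos: "0 < t \<Longrightarrow> t < 1/3 \<Longrightarrow> Lf t > 0"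
  unfolding Lf_def by (subst ln_gt_zero_iff) (auto simp: field_simps)
lemma Lf_neg: "1/3 < t \<Longrightarrow> t < 1/2 \<Longrightarrow> Lf t < 0"
  unfolding Lf_def by (subst ln_less_zero_iff) (auto simp: field_simps)
lemma h_third: "h (1/3) = 0" unfolding h_def by simp

lemma h_deriv': "0 < x \<Longrightarrow> x < 1/2 \<Longrightarrow> (h has_real_derivative -3*((1-4*x)*Lf x)) (at x)"
  using h_deriv[of x] by (simp only: mult.assoc)

lemma h_cont: "0 < a \<Longrightarrow> b < 1/2 \<Longrightarrow> continuous_on {a..b} h"
  by (intro continuous_at_imp_continuous_on ballI DERIV_isCont[OF h_deriv]) auto

lemma h_dec: assumes "0 < a" "a < b" "b \<le> 1/4" shows "h b < h a"
proof (rule DERIV_neg_imp_decreasing_open[OF assms(2) _ h_cont])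
  fix x assume x: "a < x" "x < b"
  show "\<exists>y. (h has_real_derivative y) (at x) \<and> y < 0"
  proof -
    have "(1-4*x) * Lf x > 0" using x assms Lf_pos[of x] by (intro mult_pos_pos) auto
    then have "-3*((1-4*x)*Lf x) < 0" by linarith
    moreover have "(h has_real_derivative -3*((1-4*x)*Lf x)) (at x)" by (rule h_deriv') (use x assms in auto)
    ultimately show ?thesis by blast
  qed
qed (use assms in auto)

lemma h_nonpos: assumes "1/4 \<le> t" "t < 1/2" shows "h t \<le> 0"
proof -
  consider "t < 1/3" | "t = 1/3" | "t > 1/3" by linarith
  then show ?thesis
  proof cases
    case 1
    have "h t < h (1/3)"
    proof (rule DERIV_pos_imp_increasing_open[OF 1 _ h_cont])
      fix x assume x: "t < x" "x < 1/3"
      show "\<exists>y. (h has_real_derivative y) (at x) \<and> y > 0"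
      proof -
        have "(1-4*x) * Lf x < 0" using x assms Lf_pos[of x] by (intro mult_neg_pos) auto
        then have "-3*((1-4*x)*Lf x) > 0" by linarith
        moreover have "(h has_real_derivative -3*((1-4*x)*Lf x)) (at x)" by (rule h_deriv') (use x assms in auto)
        ultimately show ?thesis by blast
      qed
    qed (use assms in auto)
    then show ?thesis using h_third by simp
  next
    case 2 then show ?thesis by (subst 2) (simp add: h_third)
  next
    case 3
    have "h (1/3) > h t"
    proof (rule DERIV_neg_imp_decreasing_open[OF 3 _ h_cont])
      fix x assume x: "1/3 < x" "x < t"
      have "(1-4*x) * Lf x > 0" using x assms Lf_neg[of x] by (intro mult_neg_neg) auto
      then have "-3*((1-4*x)*Lf x) < 0" by linarith
      moreover have "(h has_real_derivative -3*((1-4*x)*Lf x)) (at x)" by (rule h_deriv') (use x assms in auto)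
      ultimately show "\<exists>y. (h has_real_derivative y) (at x) \<and> y < 0" by blast
    qed (use assms in auto)
    then show ?thesis using h_third by simp
  qed
qed

lemma h_lim: "(h \<longlongrightarrow> 1) (at_right 0)" unfolding h_def by real_asymp

lemma h_lt1: assumes "0 < t" "t < 1/2" shows "h t < 1"
proof (cases "t \<le> 1/4")
  case True
  have "h t < h (t/2)" using h_dec[of "t/2" t] True assms by auto
  moreover have "h (t/2) \<le> 1"
  proof (rule tendsto_lowerbound[OF h_lim])
    show "\<forall>\<^sub>F x in at_right 0. h (t / 2) \<le> h x"
    proof (rule eventually_mono[OF eventually_at_right_real[of 0 "t/2"]])
      fix x assume "x \<in> {0<..<t/2}"
      then show "h (t/2) \<le> h x" using h_dec[of x "t/2"] True by auto
    qed (use assms in auto)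
  qed simp
  ultimately show ?thesis by simp
next
  case False then show ?thesis using h_nonpos[of t] assms by simp
qed
lemma k_bounds: "0 < r \<Longrightarrow> r < 1 \<Longrightarrow> 0 < k r \<and> k r < 1/3"
  unfolding k_def by auto

lemma deriv_den_pos: "0 < t \<Longrightarrow> t < 1/2 \<Longrightarrow> 1 - r - 3*t \<noteq> 0 \<Longrightarrow> 3*t*(1-2*t)*(1-r-3*t)^2 > (0::real)"
  by (intro mult_pos_pos) auto

lemma sgn_lem: "p > 0 \<Longrightarrow> sgn (2*x / (p::real)) = sgn x"
  by (auto simp: sgn_if zero_less_divide_iff)

lemma part1:
  assumes "0 < r" "r < 1" "t \<in> {0<..<k r} \<union> {k r<..<1/2}"
  shows "f r differentiable (at t) \<and> sgn (deriv (f r) t) = sgn (r - h t) \<and> (deriv (f r) t = 0 \<longleftrightarrow> h t = r)"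
proof -
  have t: "0 < t" "t < 1/2" "t \<noteq> k r" using assms k_bounds[of r] by auto
  then have D: "1 - r - 3*t \<noteq> 0" unfolding k_def by auto
  note d = f_deriv[OF t(1,2) D]
  have dv: "deriv (f r) t = 2*(r - h t)/(3*t*(1-2*t)*(1-r-3*t)^2)" by (rule DERIV_imp_deriv[OF d])
  have p: "3*t*(1-2*t)*(1-r-3*t)^2 > 0" by (rule deriv_den_pos[OF t(1,2) D])
  have "f r differentiable (at t)" using d real_differentiable_def by blast
  moreover have "sgn (deriv (f r) t) = sgn (r - h t)" unfolding dv using p
    by (rule sgn_lem)
  moreover have "(deriv (f r) t = 0 \<longleftrightarrow> h t = r)" unfolding dv using p by auto
  ultimately show ?thesis by blast
qed

lemma h_at_k: assumes "0 < r" "r < 1" shows "h (k r) < r"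
proof -
  have kb: "0 < k r" "k r < 1/3" using k_bounds assms by auto
  have "Lf (k r) > 0" using Lf_pos kb by auto
  then have "3 * k r * (1 - 2 * k r) * Lf (k r) > 0" using kb by (intro mult_pos_pos) auto
  moreover have "h (k r) = r - 3 * k r * (1 - 2 * k r) * Lf (k r)"
  proof -
    have r: "r = 1 - 3 * k r" by (simp add: k_def field_simps)
    show ?thesis unfolding h_eq using r by linarith
  qed
  ultimately show ?thesis by linarith
qed

lemma root_exists: assumes "0 < r" "r < 1" shows "\<exists>t. 0 < t \<and> t < k r \<and> h t = r"
proof -
  have kb: "0 < k r" "k r < 1/3" using k_bounds assms by auto
  define t2 where "t2 = min (k r) (1/4)"
  have t2: "0 < t2" "t2 \<le> k r" "t2 \<le> 1/4" using kb unfolding t2_def by auto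
  have ht2: "h t2 < r"
  proof (cases "k r \<le> 1/4")
    case True then show ?thesis using h_at_k assms t2_def by simp
  next
    case False then have "t2 = 1/4" unfolding t2_def by simp
    then show ?thesis using h_nonpos[of t2] assms by simp
  qed
  have ev: "\<forall>\<^sub>F x in at_right 0. h x > r \<and> x \<in> {0<..<t2}"
    using order_tendstoD(1)[OF h_lim assms(2)] eventually_at_right_real[OF t2(1)]
    by (rule eventually_conj)
  obtain t1 where t1: "h t1 > r" "0 < t1" "t1 < t2"
    using eventually_happens[OF ev] by auto
  obtain x where x: "t1 \<le> x" "x \<le> t2" "h x = r"
  proof -
    have "\<exists>x. t1 \<le> x \<and> x \<le> t2 \<and> h x = r"
    proof (rule IVT2)
      show "\<forall>x. t1 \<le> x \<and> x \<le> t2 \<longrightarrow> isCont h x"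
        using t1 t2 by (auto intro!: DERIV_isCont[OF h_deriv])
    qed (use t1 ht2 in auto)
    then show ?thesis using that by blast
  qed
  have "x \<noteq> t2" using x ht2 by auto
  then have "x < k r" using x t2 by linarith
  then show ?thesis by (intro exI[of _ x] conjI) (use x t1 in auto)
qed

lemma root_small: assumes "0 < r" "0 < t" "t < 1/2" "h t = r" shows "t < 1/4"
  using h_nonpos[of t] assms by force

lemma root_unique: assumes "0 < r" "0 < t" "t < 1/2" "h t = r" "0 < t'" "t' < 1/2" "h t' = r"
  shows "t = t'"
proof -
  have "t < 1/4" "t' < 1/4" using root_small assms by blast+
  then show ?thesis using h_dec[of t t'] h_dec[of t' t] assms by (cases t t' rule: linorder_cases) auto
qed

lemma m0_props:
  assumes "0 < r" "r < 1"
  shows "(\<exists>!t. t \<in> {0<..<k r} \<and> deriv (f r) t = 0) \<and> m0 r \<in> {0<..<k r} \<and> deriv (f r) (m0 r) = 0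
    \<and> h (m0 r) = r \<and> m0 r < 1/4"
proof -
  have kb: "0 < k r" "k r < 1/3" using k_bounds assms by auto
  have eq: "deriv (f r) t = 0 \<longleftrightarrow> h t = r" if "t \<in> {0<..<k r}" for t
    using part1[OF assms, of t] that by auto
  obtain t0 where t0: "0 < t0" "t0 < k r" "h t0 = r" using root_exists[OF assms] by blast
  have P: "t0 \<in> {0<..<k r} \<and> deriv (f r) t0 = 0" using eq t0 by auto
  have U: "t = t0" if "t \<in> {0<..<k r} \<and> deriv (f r) t = 0" for t
    using that eq root_unique[of r t t0] t0 kb assms by auto
  have ex1: "\<exists>!t. t \<in> {0<..<k r} \<and> deriv (f r) t = 0" using P U by blast
  have m: "m0 r = t0" unfolding m0_def using P U by (rule the_equality)
  show ?thesis using ex1 m P t0 root_small[of r t0] kb assms by auto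
qed
lemma fd_neg: assumes "0 < z" "z < 1/2" "1 - r - 3*z \<noteq> 0" "h z > r"
  shows "\<exists>y. (f r has_real_derivative y) (at z) \<and> y < 0"
proof -
  have p: "3*z*(1-2*z)*(1-r-3*z)^2 > 0" by (rule deriv_den_pos[OF assms(1-3)])
  have "2*(r - h z)/(3*z*(1-2*z)*(1-r-3*z)^2) < 0" 
  proof (rule divide_neg_pos[OF _ p])
    show "2 * (r - h z) < 0" using assms(4) by simp
  qed
  then show ?thesis using f_deriv[OF assms(1-3)] by blast
qed

lemma fd_pos: assumes "0 < z" "z < 1/2" "1 - r - 3*z \<noteq> 0" "h z < r"
  shows "\<exists>y. (f r has_real_derivative y) (at z) \<and> y > 0"
proof -
  have p: "3*z*(1-2*z)*(1-r-3*z)^2 > 0" by (rule deriv_den_pos[OF assms(1-3)])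
  have "2*(r - h z)/(3*z*(1-2*z)*(1-r-3*z)^2) > 0" 
  proof (rule divide_pos_pos[OF _ p])
    show "0 < 2 * (r - h z)" using assms(4) by simp
  qed
  then show ?thesis using f_deriv[OF assms(1-3)] by blast
qed

lemma mono_lem:
  fixes F :: "real \<Rightarrow> real"
  assumes "\<And>z. a < z \<Longrightarrow> z < b \<Longrightarrow> \<exists>y. (F has_real_derivative y) (at z) \<and> y > 0"
  shows "strict_mono_on {a<..<b} F"
proof (rule strict_mono_onI)
  fix x y assume xy: "x \<in> {a<..<b}" "y \<in> {a<..<b}" "x < y"
  show "F x < F y"
  proof (rule DERIV_pos_imp_increasing[OF xy(3)])
    fix w assume "x \<le> w" "w \<le> y"
    then show "\<exists>d. (F has_real_derivative d) (at w) \<and> d > 0" using xy by (intro assms) auto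
  qed
qed

lemma antimono_lem:
  fixes F :: "real \<Rightarrow> real"
  assumes "\<And>z. a < z \<Longrightarrow> z < b \<Longrightarrow> \<exists>y. (F has_real_derivative y) (at z) \<and> y < 0"
  shows "strict_antimono_on {a<..<b} F"
proof (rule monotone_onI)
  fix x y assume xy: "x \<in> {a<..<b}" "y \<in> {a<..<b}" "x < y"
  show "F y < F x"
  proof (rule DERIV_neg_imp_decreasing[OF xy(3)])
    fix w assume "x \<le> w" "w \<le> y"
    then show "\<exists>d. (F has_real_derivative d) (at w) \<and> d < 0" using xy by (intro assms) auto
  qed
qed

lemma part2_mono:
  assumes "0 < r" "r < 1"
  shows "strict_antimono_on {0<..<m0 r} (f r) \<and> strict_mono_on {m0 r<..<k r} (f r) \<and> strict_mono_on {k r<..<1/2} (f r)"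
proof -
  have M: "m0 r \<in> {0<..<k r}" "h (m0 r) = r" "m0 r < 1/4" using m0_props[OF assms] by auto
  have kb: "0 < k r" "k r < 1/3" using k_bounds assms by auto
  have hlt: "h z < r" if "m0 r < z" "z < 1/2" for z
  proof (cases "z \<le> 1/4")
    case True then show ?thesis using h_dec[of "m0 r" z] M that by auto
  next
    case False then show ?thesis using h_nonpos[of z] that assms by auto
  qed
  have D: "1 - r - 3*z \<noteq> 0" if "z \<noteq> k r" for z using that unfolding k_def by auto
  have 1: "strict_antimono_on {0<..<m0 r} (f r)"
  proof (rule antimono_lem)
    fix z assume z: "0 < z" "z < m0 r"
    show "\<exists>y. (f r has_real_derivative y) (at z) \<and> y < 0"
    proof (rule fd_neg)
      show "1 - r - 3*z \<noteq> 0" using z M by (intro D) auto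
      show "h z > r" using z M h_dec[of z "m0 r"] by auto
    qed (use z M kb in auto)
  qed
  have 2: "strict_mono_on {m0 r<..<k r} (f r)"
  proof (rule mono_lem)
    fix z assume z: "m0 r < z" "z < k r"
    show "\<exists>y. (f r has_real_derivative y) (at z) \<and> y > 0"
    proof (rule fd_pos)
      show "1 - r - 3*z \<noteq> 0" using z M by (intro D) auto
      show "h z < r" using z M kb by (intro hlt) auto
    qed (use z M kb in auto)
  qed
  have 3: "strict_mono_on {k r<..<1/2} (f r)"
  proof (rule mono_lem)
    fix z assume z: "k r < z" "z < 1/2"
    show "\<exists>y. (f r has_real_derivative y) (at z) \<and> y > 0"
    proof (rule fd_pos)
      show "1 - r - 3*z \<noteq> 0" using z M by (intro D) auto
      show "h z < r" using z M kb by (intro hlt) auto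
    qed (use z M kb in auto)
  qed
  show ?thesis using 1 2 3 by blast
qed

lemma part3_mono:
  assumes "1 \<le> r"
  shows "strict_mono_on {0<..<1/2} (f r)"
proof (rule mono_lem)
  fix z :: real assume z: "0 < z" "z < 1/2"
  show "\<exists>y. (f r has_real_derivative y) (at z) \<and> y > 0"
  proof (rule fd_pos)
    show "1 - r - 3*z \<noteq> 0" using z assms by auto
    show "h z < r" using z assms h_lt1[of z] by auto
  qed (use z in auto)
qed
lemma Lf_top0: "filterlim Lf at_top (at_right 0)" unfolding Lf_def[abs_def] by real_asymp
lemma Lf_half: "filterlim (\<lambda>t. - Lf t) at_top (at_left (1/2))" unfolding Lf_def[abs_def] by real_asymp
lemma inv_top: "filterlim (\<lambda>x::real. 2/(3*x)) at_top (at_right 0)" by real_asymp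
lemma inv_bot: "filterlim (\<lambda>x::real. 2/(3*x)) at_bot (at_left 0)" by real_asymp

lemma Lf_cont: assumes "0 < a" "a < 1/2" shows "(Lf \<longlongrightarrow> Lf a) (at a within S)"
proof -
  have "isCont Lf a" by (rule DERIV_isCont[OF Lf_deriv]) (use assms in auto)
  then show ?thesis by (simp add: isCont_def tendsto_within_subset[OF _ subset_UNIV] )
qed

lemma lim_right0:
  assumes "r < 1" shows "filterlim (f r) at_top (at_right 0)"
proof -
  have "((\<lambda>t. 2 / (3 * (1 - r - 3 * t))) \<longlongrightarrow> 2 / (3 * (1 - r - 3 * 0))) (at_right 0)"
    using assms by (intro tendsto_intros) auto
  then have "LIM t at_right 0. 2 / (3 * (1 - r - 3 * t)) * Lf t :> at_top"
    by (rule filterlim_tendsto_pos_mult_at_top[OF _ _ Lf_top0]) (use assms in simp)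
  then show ?thesis unfolding f_eq .
qed

lemma lim_half:
  assumes "0 < r" shows "filterlim (f r) at_top (at_left (1/2))"
proof -
  have "((\<lambda>t. - (2 / (3 * (1 - r - 3 * t)))) \<longlongrightarrow> - (2 / (3 * (1 - r - 3 * (1/2))))) (at_left (1/2))"
    using assms by (intro tendsto_intros) auto
  then have "LIM t at_left (1/2). - (2 / (3 * (1 - r - 3 * t))) * - Lf t :> at_top"
    by (rule filterlim_tendsto_pos_mult_at_top[OF _ _ Lf_half]) (use assms in \<open>simp add: field_simps\<close>)
  then show ?thesis unfolding f_eq by simp
qed

lemma lim_left_k:
  assumes "0 < r" "r < 1" shows "filterlim (f r) at_top (at_left (k r))"
proof -
  have kb: "0 < k r" "k r < 1/3" using k_bounds assms by auto
  have D: "filterlim (\<lambda>t. 1 - r - 3 * t) (at_right 0) (at_left (k r))"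
  proof (rule tendsto_imp_filterlim_at_right)
    have "((\<lambda>t. 1 - r - 3 * t) \<longlongrightarrow> 1 - r - 3 * k r) (at_left (k r))" by (intro tendsto_intros)
    moreover have "1 - r - 3 * k r = 0" by (simp add: k_def)
    ultimately show "((\<lambda>t. 1 - r - 3 * t) \<longlongrightarrow> 0) (at_left (k r))" by simp
    show "\<forall>\<^sub>F x in at_left (k r). 0 < 1 - r - 3 * x"
      by (rule eventually_mono[OF eventually_at_left_real[OF kb(1)]]) (auto simp: k_def)
  qed
  have A: "filterlim (\<lambda>t. 2 / (3 * (1 - r - 3 * t))) at_top (at_left (k r))"
    using filterlim_compose[OF inv_top D] by simp
  have "LIM t at_left (k r). Lf t * (2 / (3 * (1 - r - 3 * t))) :> at_top"
    by (rule filterlim_tendsto_pos_mult_at_top[OF Lf_cont Lf_pos A]) (use kb in auto)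
  then show ?thesis unfolding f_eq by (simp add: mult.commute)
qed

lemma lim_right_k:
  assumes "0 < r" "r < 1" shows "filterlim (f r) at_bot (at_right (k r))"
proof -
  have kb: "0 < k r" "k r < 1/3" using k_bounds assms by auto
  have D: "filterlim (\<lambda>t. 1 - r - 3 * t) (at_left 0) (at_right (k r))"
  proof (rule tendsto_imp_filterlim_at_left)
    have "((\<lambda>t. 1 - r - 3 * t) \<longlongrightarrow> 1 - r - 3 * k r) (at_right (k r))" by (intro tendsto_intros)
    moreover have "1 - r - 3 * k r = 0" by (simp add: k_def)
    ultimately show "((\<lambda>t. 1 - r - 3 * t) \<longlongrightarrow> 0) (at_right (k r))" by simp
    show "\<forall>\<^sub>F x in at_right (k r). 1 - r - 3 * x < 0"
      by (rule eventually_mono[OF eventually_at_right_real[of "k r" 1]]) (use assms in \<open>auto simp: k_def\<close>)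
  qed
  have A: "filterlim (\<lambda>t. 2 / (3 * (1 - r - 3 * t))) at_bot (at_right (k r))"
    using filterlim_compose[OF inv_bot D] by simp
  have "LIM t at_right (k r). Lf t * (2 / (3 * (1 - r - 3 * t))) :> at_bot"
    by (rule filterlim_tendsto_pos_mult_at_bot[OF Lf_cont Lf_pos A]) (use kb in auto)
  then show ?thesis unfolding f_eq by (simp add: mult.commute)
qed

lemma lim_right0_ge1:
  assumes "1 \<le> r" shows "filterlim (f r) at_bot (at_right 0)"
proof -
  define c where "c = 2 / (3 * (r + 1/2))"
  have c: "c > 0" using assms unfolding c_def by auto
  have 1: "LIM t at_right 0. c * Lf t :> at_top"
    by (rule filterlim_tendsto_pos_mult_at_top[OF tendsto_const c Lf_top0])
  have 2: "\<forall>\<^sub>F t in at_right 0. c * Lf t \<le> - f r t"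
  proof (rule eventually_mono[OF eventually_at_right_real[of 0 "1/3"]])
    fix t :: real assume t: "t \<in> {0<..<1/3}"
    have L: "Lf t > 0" using Lf_pos t by auto
    have "c \<le> 2 / (3 * (r - 1 + 3 * t))" unfolding c_def using t assms
      by (intro divide_left_mono mult_pos_pos) auto
    then have "c * Lf t \<le> 2 / (3 * (r - 1 + 3 * t)) * Lf t" using L by (intro mult_right_mono) auto
    also have "\<dots> = - f r t"
    proof -
      have e: "3*(r-1+3*t) = -(3*(1-r-3*t))" by simp
      show ?thesis unfolding f_eq e by (simp only: divide_minus_right mult_minus_left)
    qed
    finally show "c * Lf t \<le> - f r t" .
  qed simp
  have "LIM t at_right 0. - f r t :> at_top" by (rule filterlim_at_top_mono[OF 1 2])
  then show ?thesis by (simp add: filterlim_uminus_at_bot)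
qed
lemma m0_antimono: "strict_antimono_on {0<..<1} m0"
proof (rule monotone_onI)
  fix r1 r2 :: real assume r: "r1 \<in> {0<..<1}" "r2 \<in> {0<..<1}" "r1 < r2"
  have M1: "m0 r1 > 0" "h (m0 r1) = r1" "m0 r1 < 1/4" using m0_props[of r1] r by auto
  have M2: "m0 r2 > 0" "h (m0 r2) = r2" "m0 r2 < 1/4" using m0_props[of r2] r by auto
  show "m0 r2 < m0 r1"
  proof (rule ccontr)
    assume "\<not> m0 r2 < m0 r1"
    then have "m0 r1 = m0 r2 \<or> m0 r1 < m0 r2" by auto
    then show False
    proof
      assume "m0 r1 = m0 r2" then show False using M1 M2 r by auto
    next
      assume "m0 r1 < m0 r2" then have "h (m0 r2) < h (m0 r1)" using M1 M2 by (intro h_dec) auto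
      then show False using M1 M2 r by auto
    qed
  qed
qed

lemma m0_lim: "(m0 \<longlongrightarrow> 0) (at_left 1)"
proof (rule tendsto_sandwich[of "\<lambda>_. 0" m0 _ "\<lambda>r. (1 - r) / 3"])
  show "\<forall>\<^sub>F r in at_left 1. 0 \<le> m0 r"
  proof (rule eventually_mono[OF eventually_at_left_real[of 0 1]])
    fix r :: real assume "r \<in> {0<..<1}" then show "0 \<le> m0 r" using m0_props[of r] by auto
  qed simp
  show "\<forall>\<^sub>F r in at_left 1. m0 r \<le> (1 - r) / 3"
  proof (rule eventually_mono[OF eventually_at_left_real[of 0 1]])
    fix r :: real assume "r \<in> {0<..<1}" then show "m0 r \<le> (1 - r) / 3" using m0_props[of r] by (auto simp: k_def)
  qed simp
  have "((\<lambda>r. (1 - r) / 3) \<longlongrightarrow> (1 - 1) / 3) (at_left (1::real))" by (intro tendsto_intros) simp_all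
  then show "((\<lambda>r. (1 - r) / 3) \<longlongrightarrow> 0) (at_left (1::real))" by simp
qed simp

lemma fcont: assumes "0 < a" "b < 1/2" "\<And>z. a \<le> z \<Longrightarrow> z \<le> b \<Longrightarrow> 1 - r - 3*z \<noteq> 0"
  shows "continuous_on {a..b} (f r)"
  by (intro continuous_at_imp_continuous_on ballI DERIV_isCont[OF f_deriv]) (use assms in auto)

lemma g_mono: "strict_mono_on {0<..<1} (\<lambda>r. f r (m0 r))"
proof (rule strict_mono_onI)
  fix r1 r2 :: real assume r: "r1 \<in> {0<..<1}" "r2 \<in> {0<..<1}" "r1 < r2"
  have M1: "m0 r1 > 0" "m0 r1 < k r1" "h (m0 r1) = r1" "m0 r1 < 1/4" using m0_props[of r1] r by auto
  have M2: "m0 r2 > 0" "m0 r2 < k r2" "h (m0 r2) = r2" "m0 r2 < 1/4" using m0_props[of r2] r by auto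
  have lt: "m0 r2 < m0 r1" using monotone_onD[OF m0_antimono, of r1 r2] r by auto
  have kk: "k r2 < k r1" using r by (simp add: k_def)
  have "f r1 (m0 r1) < f r1 (m0 r2)"
  proof (rule DERIV_neg_imp_decreasing_open[OF lt])
    fix z assume z: "m0 r2 < z" "z < m0 r1"
    show "\<exists>y. (f r1 has_real_derivative y) (at z) \<and> y < 0"
    proof (rule fd_neg)
      show "1 - r1 - 3*z \<noteq> 0" using z M1 by (auto simp: k_def)
      show "h z > r1" using z M1 M2 h_dec[of z "m0 r1"] by auto
    qed (use z M1 M2 in auto)
  next
    show "continuous_on {m0 r2..m0 r1} (f r1)" using M1 M2 by (intro fcont) (auto simp: k_def)
  qed
  also have "f r1 (m0 r2) < f r2 (m0 r2)"
  proof -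
    have L: "Lf (m0 r2) > 0" using M2 by (intro Lf_pos) auto
    have p2: "1 - r2 - 3 * m0 r2 > 0" using M2 by (simp add: k_def)
    have "2 / (3 * (1 - r1 - 3 * m0 r2)) < 2 / (3 * (1 - r2 - 3 * m0 r2))"
      using p2 r by (intro divide_strict_left_mono mult_pos_pos) auto
    then show ?thesis unfolding f_eq using L by (intro mult_strict_right_mono) auto
  qed
  finally show "f r1 (m0 r1) < f r2 (m0 r2)" .
qed

lemma g_lim: "filterlim (\<lambda>r. f r (m0 r)) at_top (at_left 1)"
proof -
  have G: "filterlim (\<lambda>x::real. 2/(9*x*(1-2*x))) at_top (at_right 0)" by real_asymp
  have M: "filterlim m0 (at_right 0) (at_left 1)"
  proof (rule tendsto_imp_filterlim_at_right[OF m0_lim])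
    show "\<forall>\<^sub>F r in at_left 1. 0 < m0 r"
    proof (rule eventually_mono[OF eventually_at_left_real[of 0 1]])
      fix r :: real assume "r \<in> {0<..<1}" then show "0 < m0 r" using m0_props[of r] by auto
    qed simp
  qed
  have C: "filterlim (\<lambda>r. 2/(9*m0 r*(1-2*m0 r))) at_top (at_left 1)"
    using filterlim_compose[OF G M] by simp
  have E: "\<forall>\<^sub>F r in at_left 1. 2/(9*m0 r*(1-2*m0 r)) = f r (m0 r)"
  proof (rule eventually_mono[OF eventually_at_left_real[of 0 1]])
    fix r :: real assume r: "r \<in> {0<..<1}"
    define m where "m = m0 r"
    have M: "m > 0" "h m = r" "m < 1/4" using m0_props[of r] r unfolding m_def by auto
    have L: "Lf m > 0" using M by (intro Lf_pos) auto
    have e: "1 - r - 3 * m = 3 * m * (1 - 2 * m) * Lf m" using M(2) unfolding h_eq by linarith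
    have "f r m = 2 / (3 * (3 * m * (1 - 2 * m) * Lf m)) * Lf m" unfolding f_eq e ..
    also have "\<dots> = 2/(9*m*(1-2*m))" using M L by (simp add: field_simps)
    finally show "2/(9*m0 r*(1-2*m0 r)) = f r (m0 r)" unfolding m_def by simp
  qed simp
  show ?thesis using filterlim_cong[OF refl refl E] C by simp
qed

theorem lemma5p3:
  shows
  "(\<forall>r t. 0 < r \<and> r < 1 \<and> t \<in> {0<..<k r} \<union> {k r<..<1/2} \<longrightarrow>
       f r differentiable (at t) \<and>
       sgn (deriv (f r) t) = sgn (r - h t) \<and>
       (deriv (f r) t = 0 \<longleftrightarrow> h t = r))
 \<and> (\<forall>r. 0 < r \<and> r < 1 \<longrightarrow>
       (\<exists>!t. t \<in> {0<..<k r} \<and> deriv (f r) t = 0) \<and>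
       m0 r \<in> {0<..<k r} \<and> deriv (f r) (m0 r) = 0 \<and>
       strict_antimono_on {0<..<m0 r} (f r) \<and>
       strict_mono_on {m0 r<..<k r} (f r) \<and>
       strict_mono_on {k r<..<1/2} (f r) \<and>
       filterlim (f r) at_top (at_right 0) \<and>
       filterlim (f r) at_top (at_left (k r)) \<and>
       filterlim (f r) at_top (at_left (1/2)) \<and>
       filterlim (f r) at_bot (at_right (k r)))
 \<and> (\<forall>r. 1 \<le> r \<longrightarrow>
       strict_mono_on {0<..<1/2} (f r) \<and>
       filterlim (f r) at_bot (at_right 0) \<and>
       filterlim (f r) at_top (at_left (1/2)))
 \<and> strict_antimono_on {0<..<1} m0
 \<and> (m0 \<longlongrightarrow> 0) (at_left 1)
 \<and> strict_mono_on {0<..<1} (\<lambda>r. f r (m0 r))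
 \<and> filterlim (\<lambda>r. f r (m0 r)) at_top (at_left 1)"
proof -
  have P1: "\<forall>r t. 0 < r \<and> r < 1 \<and> t \<in> {0<..<k r} \<union> {k r<..<1/2} \<longrightarrow>
       f r differentiable (at t) \<and>
       sgn (deriv (f r) t) = sgn (r - h t) \<and>
       (deriv (f r) t = 0 \<longleftrightarrow> h t = r)"
    using part1 by blast
  have P2: "\<forall>r. 0 < r \<and> r < 1 \<longrightarrow>
       (\<exists>!t. t \<in> {0<..<k r} \<and> deriv (f r) t = 0) \<and>
       m0 r \<in> {0<..<k r} \<and> deriv (f r) (m0 r) = 0 \<and>
       strict_antimono_on {0<..<m0 r} (f r) \<and>
       strict_mono_on {m0 r<..<k r} (f r) \<and>
       strict_mono_on {k r<..<1/2} (f r) \<and>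
       filterlim (f r) at_top (at_right 0) \<and>
       filterlim (f r) at_top (at_left (k r)) \<and>
       filterlim (f r) at_top (at_left (1/2)) \<and>
       filterlim (f r) at_bot (at_right (k r))"
  proof (intro allI impI)
    fix r :: real assume r: "0 < r \<and> r < 1"
    have a: "(\<exists>!t. t \<in> {0<..<k r} \<and> deriv (f r) t = 0) \<and>
       m0 r \<in> {0<..<k r} \<and> deriv (f r) (m0 r) = 0" using m0_props r by blast
    have b: "strict_antimono_on {0<..<m0 r} (f r) \<and>
       strict_mono_on {m0 r<..<k r} (f r) \<and>
       strict_mono_on {k r<..<1/2} (f r)" using part2_mono r by blast
    have c: "filterlim (f r) at_top (at_right 0)" using lim_right0 r by blast
    have d: "filterlim (f r) at_top (at_left (k r))" using lim_left_k r by blast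
    have e: "filterlim (f r) at_top (at_left (1/2))" using lim_half r by blast
    have g: "filterlim (f r) at_bot (at_right (k r))" using lim_right_k r by blast
    show "(\<exists>!t. t \<in> {0<..<k r} \<and> deriv (f r) t = 0) \<and>
       m0 r \<in> {0<..<k r} \<and> deriv (f r) (m0 r) = 0 \<and>
       strict_antimono_on {0<..<m0 r} (f r) \<and>
       strict_mono_on {m0 r<..<k r} (f r) \<and>
       strict_mono_on {k r<..<1/2} (f r) \<and>
       filterlim (f r) at_top (at_right 0) \<and>
       filterlim (f r) at_top (at_left (k r)) \<and>
       filterlim (f r) at_top (at_left (1/2)) \<and>
       filterlim (f r) at_bot (at_right (k r))"
      using a b c d e g by (simp only: conj_assoc)
  qed
  have P3: "\<forall>r. 1 \<le> r \<longrightarrow>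
       strict_mono_on {0<..<1/2} (f r) \<and>
       filterlim (f r) at_bot (at_right 0) \<and>
       filterlim (f r) at_top (at_left (1/2))"
  proof (intro allI impI)
    fix r :: real assume r: "1 \<le> r"
    show "strict_mono_on {0<..<1/2} (f r) \<and>
       filterlim (f r) at_bot (at_right 0) \<and>
       filterlim (f r) at_top (at_left (1/2))"
      using part3_mono[OF r] lim_right0_ge1[OF r] lim_half[of r] r by simp
  qed
  show ?thesis
    by (rule conjI[OF P1 conjI[OF P2 conjI[OF P3 conjI[OF m0_antimono conjI[OF m0_lim conjI[OF g_mono g_lim]]]]]])
qed

end
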